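(* Let $U\ge 2$ and let $X\subseteq\{-U,\dots,U\}$ be a set of nonzero integers. Then $$\sum_{x,y\in X}\frac{1}{H(\frac xy)}\le O(U\log U).$$
   Context: For a nonzero rational $q$, its height $H(q)$ is $\max(|a|,|b|)$ where $q=\frac ab$ with $a,b$ coprime integers. The $O(\cdot)$ hides an absolute constant. *)

theory Defs
  imports Complex_Main
begin

definition height :: "rat \<Rightarrow> int" where
  "height q = (case quotient_of q of (a, b) \<Rightarrow> max \<bar>a\<bar> \<bar>b\<bar>)"

end

theory Submission
  imports Defs
begin

lemma height_eq:
  fixes x y :: int
  assumes "x \<noteq> 0" "y \<noteq> 0"
  shows "real_of_int (height (of_int x / of_int y)) = real_of_int (max \<bar>x\<bar> \<bar>y\<bar>) / real_of_int (gcd x y)"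
proof -
  obtain a b where qa: "quotient_of (of_int x / of_int y) = (a, b)" by (cases "quotient_of (of_int x / of_int y)") auto
  have b: "b > 0" using quotient_of_denom_pos[OF qa] .
  have cop: "coprime a b" using quotient_of_coprime[OF qa] .
  have "(of_int x / of_int y :: rat) = of_int a / of_int b" using quotient_of_div[OF qa] .
  hence "x * b = a * y"
    using assms b by (simp add: frac_eq_eq) (metis of_int_eq_iff of_int_mult)
  hence "b dvd a * y" by (metis dvd_triv_right)
  hence "b dvd y" using cop by (metis coprime_commute coprime_dvd_mult_right_iff coprime_dvd_mult_left_iff)
  then obtain k where yk: "y = b * k" by blast
  have xk: "x = a * k" using \<open>x * b = a * y\<close> yk b by (simp add: algebra_simps)
  have k0: "k \<noteq> 0" using assms yk by auto
  have g: "gcd x y = \<bar>k\<bar>"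
    using cop xk yk by (simp add: gcd_mult_right abs_mult coprime_iff_gcd_eq_1 gcd.commute)
  have m: "max \<bar>x\<bar> \<bar>y\<bar> = \<bar>k\<bar> * max \<bar>a\<bar> \<bar>b\<bar>"
    using xk yk by (simp add: abs_mult max_mult_distrib_left mult.commute)
  have h: "height (of_int x / of_int y) = max \<bar>a\<bar> \<bar>b\<bar>" unfolding height_def qa by simp
  show ?thesis using h g m k0 by simp
qed



lemma layer_bound:
  "(\<Sum>a\<in>{1..int M}. \<Sum>b\<in>{1..int M}. 1 / real_of_int (max a b)) \<le> 2 * real M"
proof (induction M)
  case 0
  then show ?case by simp
next
  case (Suc M)
  define S where "S = {1..int M}"
  define m where "m = int M + 1"
  define g where "g = (\<lambda>a b::int. 1 / real_of_int (max a b))"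
  have set: "{1..int (Suc M)} = insert m S" unfolding S_def m_def by auto
  have mS: "m \<notin> S" "finite S" unfolding S_def m_def by auto
  have cS: "card S = M" unfolding S_def by simp
  have gm: "g a m = 1 / real_of_int m" if "a \<in> S" for a
    using that unfolding g_def S_def m_def by (simp add: max_def)
  have gm2: "g m b = 1 / real_of_int m" if "b \<in> S" for b
    using that unfolding g_def S_def m_def by (simp add: max_def)
  have "(\<Sum>a\<in>insert m S. \<Sum>b\<in>insert m S. g a b)
      = g m m + (\<Sum>b\<in>S. g m b) + ((\<Sum>a\<in>S. g a m) + (\<Sum>a\<in>S. \<Sum>b\<in>S. g a b))"
    using mS by (simp add: sum.distrib)
  also have "(\<Sum>b\<in>S. g m b) = real M / real_of_int m" using gm2 cS by simp
  also have "(\<Sum>a\<in>S. g a m) = real M / real_of_int m" using gm cS by simp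
  also have "g m m = 1 / real_of_int m" unfolding g_def by simp
  also have "(\<Sum>a\<in>S. \<Sum>b\<in>S. g a b) \<le> 2 * real M" using Suc.IH unfolding S_def g_def .
  finally have "(\<Sum>a\<in>insert m S. \<Sum>b\<in>insert m S. g a b)
     \<le> 1 / real_of_int m + real M / real_of_int m + (real M / real_of_int m + 2 * real M)" by simp
  also have "\<dots> \<le> 2 * real (Suc M)"
    unfolding m_def by (simp add: field_simps)
  finally show ?case unfolding set g_def .
qed

lemma harm_bound:
  assumes "N \<ge> 1"
  shows "(\<Sum>d\<in>{1..int N}. 1 / real_of_int d) \<le> 1 + ln (real N)"
  using assms
proof (induction N rule: dec_induct)
  case base
  then show ?case by simp
next
  case (step n)
  have set: "{1..int (Suc n)} = insert (int n + 1) {1..int n}" by auto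
  have key: "1 / (real n + 1) \<le> ln (real n + 1) - ln (real n)"
  proof -
    have "ln (real n / (real n + 1)) \<le> real n / (real n + 1) - 1"
      using step by (intro ln_le_minus_one) auto
    also have "\<dots> = - (1 / (real n + 1))" by (simp add: field_simps)
    finally show ?thesis using step by (simp add: ln_div)
  qed
  have "(\<Sum>d\<in>{1..int (Suc n)}. 1 / real_of_int d) = 1 / (real n + 1) + (\<Sum>d\<in>{1..int n}. 1 / real_of_int d)"
    unfolding set by simp
  also have "\<dots> \<le> 1 + ln (real (Suc n))" using key step.IH by (simp add: add.commute)
  finally show ?case .
qed

lemma sym_sum:
  fixes G :: "int \<Rightarrow> real"
  shows "(\<Sum>x\<in>{-int N..int N} - {0}. G \<bar>x\<bar>) = 2 * (\<Sum>n\<in>{1..int N}. G n)"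
proof -
  have A: "{-int N..int N} - {0} = {1..int N} \<union> uminus ` {1..int N}"
    by (auto simp: image_iff)
  have D: "{1..int N} \<inter> uminus ` {1..int N} = {}" by auto
  have "(\<Sum>x\<in>{-int N..int N} - {0}. G \<bar>x\<bar>) = (\<Sum>x\<in>{1..int N}. G \<bar>x\<bar>) + (\<Sum>x\<in>uminus ` {1..int N}. G \<bar>x\<bar>)"
    unfolding A by (rule sum.union_disjoint) (use D in auto)
  also have "(\<Sum>x\<in>uminus ` {1..int N}. G \<bar>x\<bar>) = (\<Sum>x\<in>{1..int N}. G \<bar>x\<bar>)"
    by (subst sum.reindex) (auto simp: inj_on_def)
  also have "(\<Sum>x\<in>{1..int N}. G \<bar>x\<bar>) = (\<Sum>x\<in>{1..int N}. G x)" by (rule sum.cong) auto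
  finally show ?thesis by simp
qed


lemma fiber_bound:
  fixes d :: int and N :: nat
  assumes d: "d \<ge> 1"
  defines "T \<equiv> {p \<in> {1..int N} \<times> {1..int N}. gcd (fst p) (snd p) = d}"
  shows "(\<Sum>p\<in>T. real_of_int (gcd (fst p) (snd p)) / real_of_int (max (fst p) (snd p)))
         \<le> 2 * real_of_int (int N div d)"
proof -
  define h where "h = (\<lambda>p::int\<times>int. (fst p div d, snd p div d))"
  define g where "g = (\<lambda>p::int\<times>int. 1 / real_of_int (max (fst p) (snd p)))"
  have "(\<Sum>p\<in>T. real_of_int (gcd (fst p) (snd p)) / real_of_int (max (fst p) (snd p)))
      = (\<Sum>p\<in>T. g (h p))"
  proof (rule sum.cong)
    fix p assume p: "p \<in> T"
    obtain x y where xy: "p = (x, y)" by (cases p)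
    have g: "gcd x y = d" and x: "x \<ge> 1" and y: "y \<ge> 1" using p unfolding T_def xy by auto
    have "d dvd x" "d dvd y" using g by (metis gcd_dvd1, metis gcd_dvd2)
    then obtain a b where a: "x = d * a" and b: "y = d * b" by blast
    have "max x y = d * max a b" using a b d by (simp add: max_mult_distrib_left)
    then show "real_of_int (gcd (fst p) (snd p)) / real_of_int (max (fst p) (snd p)) = g (h p)"
      unfolding g_def h_def xy using a b d g by simp
  qed simp
  also have "\<dots> = sum g (h ` T)"
  proof -
    have "inj_on h T"
    proof (rule inj_onI)
      fix p q assume p: "p \<in> T" and q: "q \<in> T" and e: "h p = h q"
      have "d dvd fst p" "d dvd snd p" "d dvd fst q" "d dvd snd q"
        using p q unfolding T_def by (metis (mono_tags, lifting) gcd_dvd1 gcd_dvd2 mem_Collect_eq)+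
      then show "p = q" using e unfolding h_def
        by (metis dvd_div_mult_self prod.collapse prod.inject)
    qed
    then show ?thesis by (simp add: sum.reindex)
  qed
  also have "\<dots> \<le> sum g ({1..int N div d} \<times> {1..int N div d})"
  proof (rule sum_mono2)
    show "h ` T \<subseteq> {1..int N div d} \<times> {1..int N div d}"
    proof
      fix q assume "q \<in> h ` T"
      then obtain x y where xy: "(x, y) \<in> T" and q: "q = (x div d, y div d)" unfolding h_def by auto
      have g: "gcd x y = d" and x: "x \<ge> 1" "x \<le> int N" and y: "y \<ge> 1" "y \<le> int N" using xy unfolding T_def by auto
      have "d dvd x" "d dvd y" using g by (metis gcd_dvd1, metis gcd_dvd2)
      then obtain a b where a: "x = d * a" and b: "y = d * b" by blast
      have "a \<ge> 1" using a x d by (metis int_one_le_iff_zero_less linorder_not_less mult_nonneg_nonpos order_trans zero_le_one not_one_le_zero order_less_le_trans pos_imp_zdiv_pos_iff zero_less_mult_pos) 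
      moreover have "b \<ge> 1" using b y d by (metis int_one_le_iff_zero_less linorder_not_less mult_nonneg_nonpos order_trans zero_le_one not_one_le_zero order_less_le_trans pos_imp_zdiv_pos_iff zero_less_mult_pos) 
      moreover have "x div d \<le> int N div d" "y div d \<le> int N div d" using x y d by (auto intro: zdiv_mono1)
      ultimately show "q \<in> {1..int N div d} \<times> {1..int N div d}" using q a b d by auto
    qed
  qed (auto simp: g_def)
  also have "\<dots> = (\<Sum>a\<in>{1..int (nat (int N div d))}. \<Sum>b\<in>{1..int (nat (int N div d))}. 1 / real_of_int (max a b))"
    using d by (simp add: g_def sum.cartesian_product case_prod_beta)
  also have "\<dots> \<le> 2 * real (nat (int N div d))" by (rule layer_bound)
  also have "\<dots> = 2 * real_of_int (int N div d)" using d by (simp add: pos_imp_zdiv_nonneg_iff)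
  finally show ?thesis .
qed


lemma pos_bound:
  fixes N :: nat
  assumes N: "N \<ge> 1"
  shows "(\<Sum>x\<in>{1..int N}. \<Sum>y\<in>{1..int N}. real_of_int (gcd x y) / real_of_int (max x y))
         \<le> 2 * real N * (1 + ln (real N))"
proof -
  define P where "P = {1..int N}"
  define F where "F = (\<lambda>p::int\<times>int. real_of_int (gcd (fst p) (snd p)) / real_of_int (max (fst p) (snd p)))"
  have "(\<Sum>x\<in>P. \<Sum>y\<in>P. real_of_int (gcd x y) / real_of_int (max x y)) = sum F (P \<times> P)"
    by (simp add: F_def sum.cartesian_product case_prod_beta)
  also have "\<dots> = (\<Sum>d\<in>P. sum F {p. p \<in> P \<times> P \<and> gcd (fst p) (snd p) = d})"
  proof (rule sum.group[symmetric])
    show "(\<lambda>p. gcd (fst p) (snd p)) ` (P \<times> P) \<subseteq> P"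
    proof
      fix d assume "d \<in> (\<lambda>p. gcd (fst p) (snd p)) ` (P \<times> P)"
      then obtain x y where "x \<in> P" "y \<in> P" "d = gcd x y" by auto
      then show "d \<in> P" unfolding P_def
        by (auto intro: order_trans[OF gcd_le1_int]) (metis gcd_pos_int int_one_le_iff_zero_less not_one_le_zero order_le_less)
    qed
  qed (auto simp: P_def)
  also have "\<dots> \<le> (\<Sum>d\<in>P. 2 * real_of_int (int N div d))"
  proof (rule sum_mono)
    fix d assume "d \<in> P"
    then have "d \<ge> 1" unfolding P_def by auto
    from fiber_bound[OF this, of N] show "sum F {p. p \<in> P \<times> P \<and> gcd (fst p) (snd p) = d} \<le> 2 * real_of_int (int N div d)"
      unfolding F_def P_def by simp
  qed
  also have "\<dots> \<le> (\<Sum>d\<in>P. 2 * real N * (1 / real_of_int d))"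
  proof (rule sum_mono)
    fix d assume "d \<in> P"
    then have d: "d \<ge> 1" unfolding P_def by auto
    have "real_of_int (int N div d) * real_of_int d \<le> real_of_int (int N)"
    proof -
      have "(int N div d) * d \<le> int N" using d div_mult_mod_eq[of "int N" d] pos_mod_sign[of d "int N"] by linarith
      then show ?thesis by (metis of_int_le_iff of_int_mult)
    qed
    then have "real_of_int (int N div d) \<le> real N / real_of_int d" using d by (simp add: field_simps)
    then show "2 * real_of_int (int N div d) \<le> 2 * real N * (1 / real_of_int d)" by simp
  qed
  also have "\<dots> = 2 * real N * (\<Sum>d\<in>P. 1 / real_of_int d)" by (simp add: sum_distrib_left)
  also have "\<dots> \<le> 2 * real N * (1 + ln (real N))"
    using harm_bound[OF N] unfolding P_def by (intro mult_left_mono) auto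
  finally show ?thesis unfolding P_def .
qed


theorem lemma11p4:
  "\<exists>C::real. \<forall>(U::real) (X::int set).
     U \<ge> 2 \<longrightarrow> X \<subseteq> {x. x \<noteq> 0 \<and> real_of_int \<bar>x\<bar> \<le> U} \<longrightarrow>
     (\<Sum>x\<in>X. \<Sum>y\<in>X. 1 / real_of_int (height (of_int x / of_int y))) \<le> C * U * ln U"
proof (intro exI allI impI)
  fix U :: real and X :: "int set"
  assume U: "U \<ge> 2" and X: "X \<subseteq> {x. x \<noteq> 0 \<and> real_of_int \<bar>x\<bar> \<le> U}"
  define N where "N = nat \<lfloor>U\<rfloor>"
  define A where "A = {-int N..int N} - {0}"
  define P where "P = {1..int N}"
  define f where "f = (\<lambda>x y::int. 1 / real_of_int (height (of_int x / of_int y)))"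
  define K where "K = (\<lambda>x y::int. real_of_int (gcd x y) / real_of_int (max x y))"
  have N2: "N \<ge> 2" unfolding N_def using U by linarith
  have NU: "real N \<le> U" unfolding N_def using U by linarith
  have XA: "X \<subseteq> A"
  proof
    fix x assume "x \<in> X"
    with X have "x \<noteq> 0" "real_of_int \<bar>x\<bar> \<le> U" by auto
    then have "\<bar>x\<bar> \<le> \<lfloor>U\<rfloor>" by (simp add: le_floor_iff)
    then show "x \<in> A" unfolding A_def N_def using \<open>x \<noteq> 0\<close> U by auto
  qed
  have finA: "finite A" unfolding A_def by simp
  have fK: "f x y = K \<bar>x\<bar> \<bar>y\<bar>" if "x \<in> A" "y \<in> A" for x y
    using that height_eq[of x y] unfolding A_def f_def K_def by simp
  have f0: "f x y \<ge> 0" if "x \<in> A" "y \<in> A" for x y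
    using fK[OF that] unfolding K_def by simp
  have "(\<Sum>x\<in>X. \<Sum>y\<in>X. f x y) \<le> (\<Sum>x\<in>X. \<Sum>y\<in>A. f x y)"
    using XA finA f0 by (intro sum_mono sum_mono2) (auto intro: finite_subset)
  also have "\<dots> \<le> (\<Sum>x\<in>A. \<Sum>y\<in>A. f x y)"
    using XA finA f0 by (intro sum_mono2) (auto intro: sum_nonneg)
  also have "\<dots> = (\<Sum>x\<in>A. \<Sum>y\<in>A. K \<bar>x\<bar> \<bar>y\<bar>)"
    using fK by (intro sum.cong) auto
  also have "\<dots> = (\<Sum>x\<in>A. 2 * (\<Sum>n\<in>P. K \<bar>x\<bar> n))"
    unfolding A_def P_def by (intro sum.cong refl sym_sum)
  also have "\<dots> = 2 * (\<Sum>m\<in>P. 2 * (\<Sum>n\<in>P. K m n))"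
    unfolding A_def P_def by (rule sym_sum)
  also have "\<dots> = 4 * (\<Sum>m\<in>P. \<Sum>n\<in>P. K m n)" by (simp add: sum_distrib_left)
  also have "\<dots> \<le> 4 * (2 * real N * (1 + ln (real N)))"
    using pos_bound[of N] N2 unfolding P_def K_def by simp
  also have "\<dots> \<le> 8 * U * (1 + ln U)"
  proof -
    have "ln (real N) \<le> ln U" using NU N2 by simp
    then have "1 + ln (real N) \<le> 1 + ln U" by simp
    moreover have "0 \<le> 1 + ln (real N)" using N2 by simp
    ultimately have "real N * (1 + ln (real N)) \<le> U * (1 + ln U)"
      using NU by (intro mult_mono) auto
    then show ?thesis by simp
  qed
  also have "\<dots> \<le> (8 + 8 / ln 2) * U * ln U"
  proof -
    have l2: "ln 2 > (0::real)" by simp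
    have "ln 2 \<le> ln U" using U by simp
    then have "1 \<le> ln U / ln 2" using l2 by simp
    then have "8 * U * 1 \<le> 8 * U * (ln U / ln 2)" using U by (intro mult_left_mono) auto
    then show ?thesis by (simp add: algebra_simps)
  qed
  finally show "(\<Sum>x\<in>X. \<Sum>y\<in>X. 1 / real_of_int (height (of_int x / of_int y))) \<le> (8 + 8 / ln 2) * U * ln U"
    unfolding f_def .
qed

end
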